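(* Consider $N$ heterogeneous agents $x_i(k+1)=A_ix_i(k)+B_iu_i(k)$, $y_i(k)=C_ix_i(k)\in\mathbb{R}^p$, with local measurements $z_i(k)=C_i^mx_i(k)$, where for each $i$: $(A_i,B_i)$ stabilizable, $(C_i,A_i)$ detectable, $(C_i,A_i,B_i)$ right-invertible, $(C_i^m,A_i)$ detectable. Consider an exosystem $x_r(k+1)=A_rx_r(k)$, $y_r(k)=C_rx_r(k)$ with $(C_r,A_r)$ observable and all eigenvalues of $A_r$ in the closed unit disc. Let $(\check C_r,\check A_r,\check B_r)$ be a triple such that $\check x_r(k+1)=\check A_r\check x_r(k)$, $y_r(k)=\check C_r\check x_r(k)$ reproduces every output $y_r$ of the exosystem for a suitable initial condition, whose eigenvalues are those of $A_r$ together with possibly additional zeros, and which is invertible of uniform rank $n_q$ with no invariant zeros. Suppose for each $i$ a pre-compensator $\xi_i(k+1)=A_{i,h}\xi_i+B_{i,h}z_i+E_{i,h}v_i$, $u_i=C_{i,h}\xi_i+D_{i,h}v_i$ is given such that the interconnection reads $\bar x_i(k+1)=\check A_r\bar x_i(k)+\check B_r(v_i(k)+d_i(k))$, $y_i(k)=\check C_r\bar x_i(k)$, with $\omega_i(k+1)=A_{i,s}\omega_i(k)$, $d_i=C_{i,s}\omega_i$, $A_{i,s}$ Schur stable. Let $K,H$ be such that $\check A_r-\check B_rK$ and $\check A_r-H\check C_r$ are Schur stable, and apply the protocol $$\begin{aligned}\xi_i(k+1)&=A_{i,h}\xi_i(k)+B_{i,h}z_i(k)-E_{i,h}K\eta_i(k),\\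 \hat x_i(k+1)&=\check A_r\hat x_i(k)+H(\bar\zeta_i(k)-\check C_r\hat x_i(k))-\check B_rK\check\zeta_i(k),\\ \eta_i(k+1)&=(\check A_r-\check B_rK)\eta_i(k)+\check A_r\hat x_i(k)-\check A_r\check\zeta_i(k),\\ u_i(k)&=C_{i,h}\xi_i(k)-D_{i,h}K\eta_i(k),\end{aligned}$$ where $\bar\zeta_i(k)=\frac{1}{2+d_{in}(i)}\big(\sum_{j}a_{ij}(y_i(k)-y_j(k))+\iota_i(y_i(k)-y_r(k))\big)$ and $\check\zeta_i(k)=\eta_i(k)-\sum_j\bar d_{ij}\eta_j(k)$. Then for any nonempty node set $\mathscr C$, any $N$, any graph in $\mathbb{G}^N_{\mathscr C}$, all initial conditions and all exosystem initial conditions $x_r(0)$, regulated output synchronization holds: $\lim_{k\to\infty}(y_i(k)-y_r(k))=0$ for all $i$.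
   Context: The network is a weighted directed graph on nodes $\{1,\dots,N\}$ with adjacency matrix $[a_{ij}]$, $a_{ij}\ge0$, $a_{ii}=0$ ($a_{ij}>0$ means an edge from $j$ to $i$), Laplacian $L$ ($\ell_{ii}=\sum_k a_{ik}$, $\ell_{ij}=-a_{ij}$), and $D_{in}=\operatorname{diag}\{d_{in}(i)\}$ with $d_{in}(i)=\sum_ja_{ij}$. A nonempty node set $\mathscr C$ (root set) consists of agents that receive $y_i-y_r$; $\iota_i=1$ if $i\in\mathscr C$ and $0$ otherwise. $\mathbb{G}^N_{\mathscr C}$ is the set of graphs on $N$ nodes such that every node is a member of a directed tree whose root lies in $\mathscr C$. $\bar L=L+\operatorname{diag}\{\iota_i\}$ and $\bar D=[\bar d_{ij}]=I-(2I+D_{in})^{-1}\bar L$. Schur stable means all eigenvalues in the open unit disc. *)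

theory Defs
  imports "Jordan_Normal_Form.Spectral_Radius"
begin

definition cmat :: "real mat \<Rightarrow> complex mat" where
  "cmat M = map_mat complex_of_real M"

definition schur_stable :: "real mat \<Rightarrow> bool" where
  "schur_stable M \<longleftrightarrow> M \<in> carrier_mat (dim_row M) (dim_row M) \<and>
     (\<forall>e. eigenvalue (cmat M) e \<longrightarrow> cmod e < 1)"

definition stabilizable :: "real mat \<Rightarrow> real mat \<Rightarrow> bool" where
  "stabilizable A B \<longleftrightarrow> (\<exists>F \<in> carrier_mat (dim_col B) (dim_row A). schur_stable (A + B * F))"

definition detectable :: "real mat \<Rightarrow> real mat \<Rightarrow> bool" where
  "detectable C A \<longleftrightarrow> (\<exists>L \<in> carrier_mat (dim_row A) (dim_row C). schur_stable (A + L * C))"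

definition observable :: "real mat \<Rightarrow> real mat \<Rightarrow> bool" where
  "observable C A \<longleftrightarrow> (\<forall>x \<in> carrier_vec (dim_row A).
     (\<forall>k < dim_row A. C *\<^sub>v ((A ^\<^sub>m k) *\<^sub>v x) = 0\<^sub>v (dim_row C)) \<longrightarrow> x = 0\<^sub>v (dim_row A))"

definition rosenbrock :: "real mat \<Rightarrow> real mat \<Rightarrow> real mat \<Rightarrow> complex \<Rightarrow> complex mat" where
  "rosenbrock C A B z = four_block_mat
      (z \<cdot>\<^sub>m 1\<^sub>m (dim_row A) - cmat A) (- cmat B)
      (cmat C) (0\<^sub>m (dim_row C) (dim_col B))"

definition full_row_rank :: "complex mat \<Rightarrow> bool" where
  "full_row_rank M \<longleftrightarrow> (\<forall>w \<in> carrier_vec (dim_row M).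
      transpose_mat M *\<^sub>v w = 0\<^sub>v (dim_col M) \<longrightarrow> w = 0\<^sub>v (dim_row M))"

text \<open>(C,A,B) right-invertible: the Rosenbrock matrix has full (row) normal rank n + p,
  i.e. full row rank for some z (equivalently the transfer matrix has normal rank p).\<close>
definition right_invertible :: "real mat \<Rightarrow> real mat \<Rightarrow> real mat \<Rightarrow> bool" where
  "right_invertible C A B \<longleftrightarrow> (\<exists>z. full_row_rank (rosenbrock C A B z))"

text \<open>(C,A,B) square (#inputs = #outputs), invertible (Rosenbrock matrix of full normal rank),
  and of uniform rank nq: C A^k B = 0 for k < nq - 1 and C A^(nq-1) B is invertible.\<close>
definition invertible_uniform_rank :: "real mat \<Rightarrow> real mat \<Rightarrow> real mat \<Rightarrow> nat \<Rightarrow> bool" where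
  "invertible_uniform_rank C A B nq \<longleftrightarrow> dim_col B = dim_row C \<and>
     (\<exists>z. det (rosenbrock C A B z) \<noteq> 0) \<and> 1 \<le> nq \<and>
     (\<forall>k < nq - 1. C * (A ^\<^sub>m k) * B = 0\<^sub>m (dim_row C) (dim_col B)) \<and>
     det (C * (A ^\<^sub>m (nq - 1)) * B) \<noteq> 0"

text \<open>For a square invertible system, z is an invariant zero iff the Rosenbrock matrix drops
  rank (below its full normal rank) at z, i.e. iff its determinant vanishes at z.\<close>
definition invariant_zero :: "real mat \<Rightarrow> real mat \<Rightarrow> real mat \<Rightarrow> complex \<Rightarrow> bool" where
  "invariant_zero C A B z \<longleftrightarrow> det (rosenbrock C A B z) = 0"

definition reproduces_outputs :: "real mat \<Rightarrow> real mat \<Rightarrow> real mat \<Rightarrow> real mat \<Rightarrow> bool" where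
  "reproduces_outputs Cc Ac Cr Ar \<longleftrightarrow> (\<forall>x0 \<in> carrier_vec (dim_row Ar).
     \<exists>x0' \<in> carrier_vec (dim_row Ac). \<forall>k. Cr *\<^sub>v ((Ar ^\<^sub>m k) *\<^sub>v x0) = Cc *\<^sub>v ((Ac ^\<^sub>m k) *\<^sub>v x0'))"

definition eigs_extend_by_zeros :: "real mat \<Rightarrow> real mat \<Rightarrow> bool" where
  "eigs_extend_by_zeros Ac Ar \<longleftrightarrow>
     (\<forall>e. eigenvalue (cmat Ar) e \<longrightarrow> eigenvalue (cmat Ac) e) \<and>
     (\<forall>e. eigenvalue (cmat Ac) e \<longrightarrow> eigenvalue (cmat Ar) e \<or> e = 0)"

text \<open>The interconnection "reads"
  xb(k+1) = Ac xb + Bc (v + d), y = Cc xb, w(k+1) = As w, d = Cs w: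
  every trajectory of the interconnection (for every input v) is matched by such xb, w.\<close>
definition interconnection_form ::
  "real mat \<Rightarrow> real mat \<Rightarrow> real mat \<Rightarrow> real mat \<Rightarrow>
   real mat \<Rightarrow> real mat \<Rightarrow> real mat \<Rightarrow> real mat \<Rightarrow> real mat \<Rightarrow>
   real mat \<Rightarrow> real mat \<Rightarrow> real mat \<Rightarrow> real mat \<Rightarrow> real mat \<Rightarrow> bool" where
  "interconnection_form A B C Cm Ah Bh Eh Ch Dh Ac Bc Cc As Cs \<longleftrightarrow>
    (\<forall>(v :: nat \<Rightarrow> real vec) (x :: nat \<Rightarrow> real vec) (\<xi> :: nat \<Rightarrow> real vec).
       (\<forall>k. v k \<in> carrier_vec (dim_col Bc) \<and> x k \<in> carrier_vec (dim_row A) \<and>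
            \<xi> k \<in> carrier_vec (dim_row Ah)) \<longrightarrow>
       (\<forall>k. x (Suc k) = A *\<^sub>v x k + B *\<^sub>v (Ch *\<^sub>v \<xi> k + Dh *\<^sub>v v k) \<and>
            \<xi> (Suc k) = Ah *\<^sub>v \<xi> k + Bh *\<^sub>v (Cm *\<^sub>v x k) + Eh *\<^sub>v v k) \<longrightarrow>
       (\<exists>(xb :: nat \<Rightarrow> real vec) (w :: nat \<Rightarrow> real vec). \<forall>k.
            xb k \<in> carrier_vec (dim_row Ac) \<and> w k \<in> carrier_vec (dim_row As) \<and>
            xb (Suc k) = Ac *\<^sub>v xb k + Bc *\<^sub>v (v k + Cs *\<^sub>v w k) \<and>
            w (Suc k) = As *\<^sub>v w k \<and>
            C *\<^sub>v x k = Cc *\<^sub>v xb k))"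

section \<open>Network (nodes 0..N-1; a i j > 0 means an edge from j to i)\<close>

definition weights_ok :: "nat \<Rightarrow> (nat \<Rightarrow> nat \<Rightarrow> real) \<Rightarrow> bool" where
  "weights_ok N a \<longleftrightarrow> (\<forall>i<N. \<forall>j<N. a i j \<ge> 0) \<and> (\<forall>i<N. a i i = 0)"

definition edge :: "nat \<Rightarrow> (nat \<Rightarrow> nat \<Rightarrow> real) \<Rightarrow> nat \<Rightarrow> nat \<Rightarrow> bool" where
  "edge N a j i \<longleftrightarrow> j < N \<and> i < N \<and> a i j > 0"

text \<open>Graph in G^N_C: every node lies in a directed tree rooted in C,
  i.e. every node is reachable by a directed path from some root in C.\<close>
definition in_graph_set :: "nat \<Rightarrow> nat set \<Rightarrow> (nat \<Rightarrow> nat \<Rightarrow> real) \<Rightarrow> bool" where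
  "in_graph_set N Cr a \<longleftrightarrow> weights_ok N a \<and> Cr \<subseteq> {..<N} \<and>
     (\<forall>i<N. \<exists>c\<in>Cr. (edge N a)\<^sup>*\<^sup>* c i)"

definition din :: "nat \<Rightarrow> (nat \<Rightarrow> nat \<Rightarrow> real) \<Rightarrow> nat \<Rightarrow> real" where
  "din N a i = (\<Sum>j<N. a i j)"

definition iota :: "nat set \<Rightarrow> nat \<Rightarrow> real" where
  "iota Cr i = (if i \<in> Cr then 1 else 0)"

text \<open>Entries of Lbar = L + diag(iota).\<close>
definition Lbar :: "nat \<Rightarrow> nat set \<Rightarrow> (nat \<Rightarrow> nat \<Rightarrow> real) \<Rightarrow> nat \<Rightarrow> nat \<Rightarrow> real" where
  "Lbar N Cr a i j = (if i = j then din N a i + iota Cr i else - a i j)"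

definition Dbar :: "nat \<Rightarrow> nat set \<Rightarrow> (nat \<Rightarrow> nat \<Rightarrow> real) \<Rightarrow> nat \<Rightarrow> nat \<Rightarrow> real" where
  "Dbar N Cr a i j = (if i = j then 1 else 0) - Lbar N Cr a i j / (2 + din N a i)"

definition zeta_bar :: "nat \<Rightarrow> nat set \<Rightarrow> (nat \<Rightarrow> nat \<Rightarrow> real) \<Rightarrow> nat \<Rightarrow>
    (nat \<Rightarrow> real vec) \<Rightarrow> real vec \<Rightarrow> nat \<Rightarrow> real vec" where
  "zeta_bar N Cr a p y yr i = vec p (\<lambda>l.
      ((\<Sum>j<N. a i j * (y i $ l - y j $ l)) + iota Cr i * (y i $ l - yr $ l)) / (2 + din N a i))"

definition zeta_check :: "nat \<Rightarrow> nat set \<Rightarrow> (nat \<Rightarrow> nat \<Rightarrow> real) \<Rightarrow> nat \<Rightarrow>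
    (nat \<Rightarrow> real vec) \<Rightarrow> nat \<Rightarrow> real vec" where
  "zeta_check N Cr a n eta i = vec n (\<lambda>l. eta i $ l - (\<Sum>j<N. Dbar N Cr a i j * eta j $ l))"

end

theory Submission
  imports Defs
begin


lemma aux_arith1: "r * (x + (e::real) / 2) + e * (1 - r) / 2 = r*x + e / 2"
  by (simp add: algebra_simps add_divide_distrib[symmetric])

lemma scalar_conv:
  fixes s U :: "nat \<Rightarrow> real" and r :: real
  assumes r: "0 \<le> r" "r < 1"
    and rec: "\<And>k. \<bar>s (Suc k)\<bar> \<le> r * \<bar>s k\<bar> + U k"
    and U: "U \<longlonglongrightarrow> 0"
  shows "s \<longlonglongrightarrow> 0"
proof (rule LIMSEQ_I)
  fix \<epsilon> :: real assume e: "\<epsilon> > 0"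
  have "\<epsilon> * (1 - r) / 2 > 0" using e r by auto
  from LIMSEQ_D[OF U this] obtain J where J: "\<And>k. k \<ge> J \<Longrightarrow> norm (U k) < \<epsilon> * (1 - r) / 2"
    by auto
  have ind: "\<bar>s (J + t)\<bar> \<le> r ^ t * \<bar>s J\<bar> + \<epsilon> / 2" for t
  proof (induction t)
    case 0 then show ?case using e by simp
  next
    case (Suc t)
    have u: "U (J + t) \<le> \<epsilon> * (1 - r) / 2" using J[of "J+t"] by auto
    have "\<bar>s (J + Suc t)\<bar> \<le> r * \<bar>s (J + t)\<bar> + U (J + t)" using rec[of "J+t"] by simp
    also have "\<dots> \<le> r * (r ^ t * \<bar>s J\<bar> + \<epsilon> / 2) + \<epsilon> * (1 - r) / 2"
      using Suc r u by (intro add_mono mult_left_mono) auto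
    also have "\<dots> = r ^ Suc t * \<bar>s J\<bar> + \<epsilon> / 2" using aux_arith1[of r "r ^ t * \<bar>s J\<bar>" \<epsilon>] by simp
    finally show ?case .
  qed
  have "(\<lambda>t. r ^ t * \<bar>s J\<bar>) \<longlonglongrightarrow> 0 * \<bar>s J\<bar>"
    by (intro tendsto_mult tendsto_const LIMSEQ_power_zero) (use r in auto)
  then have "(\<lambda>t. r ^ t * \<bar>s J\<bar>) \<longlonglongrightarrow> 0" by simp
  from LIMSEQ_D[OF this, of "\<epsilon>/2"] e obtain T where T: "\<And>t. t \<ge> T \<Longrightarrow> \<bar>r ^ t * \<bar>s J\<bar>\<bar> < \<epsilon>/2"
    by auto
  show "\<exists>no. \<forall>n\<ge>no. norm (s n - 0) < \<epsilon>"
  proof (intro exI allI impI)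
    fix n assume n: "n \<ge> J + T"
    define t where "t = n - J"
    have t: "n = J + t" "t \<ge> T" using n unfolding t_def by auto
    have "\<bar>s n\<bar> \<le> r ^ t * \<bar>s J\<bar> + \<epsilon> / 2" using ind t by simp
    also have "\<dots> < \<epsilon>" using T[OF t(2)] by simp
    finally show "norm (s n - 0) < \<epsilon>" by simp
  qed
qed

lemma swap_sum_aux:
  fixes M :: "'i \<Rightarrow> real"
  shows "(\<Sum>c\<in>I. M c * (\<Sum>b\<in>J. Q c b * f b)) = (\<Sum>b\<in>J. (\<Sum>c\<in>I. M c * Q c b) * f b)"
  unfolding sum_distrib_left sum_distrib_right mult.assoc by (rule sum.swap)

lemma kernel_conv:
  fixes I :: "'i set" and M :: "'i \<Rightarrow> 'i \<Rightarrow> real" and P :: "nat \<Rightarrow> 'i \<Rightarrow> 'i \<Rightarrow> real"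
    and z u :: "nat \<Rightarrow> 'i \<Rightarrow> real" and C r :: real
  assumes fin: "finite I"
    and P0: "\<And>a b. a\<in>I \<Longrightarrow> b\<in>I \<Longrightarrow> P 0 a b = (if a = b then 1 else 0)"
    and PS: "\<And>m a b. a\<in>I \<Longrightarrow> b\<in>I \<Longrightarrow> P (Suc m) a b = (\<Sum>c\<in>I. M a c * P m c b)"
    and bnd: "\<And>m a b. a\<in>I \<Longrightarrow> b\<in>I \<Longrightarrow> \<bar>P m a b\<bar> \<le> C * r^m"
    and r: "0 \<le> r" "r < 1"
    and dyn: "\<And>k a. a\<in>I \<Longrightarrow> z (Suc k) a = (\<Sum>c\<in>I. M a c * z k c) + u k a"
    and u: "\<And>a. a\<in>I \<Longrightarrow> (\<lambda>k. u k a) \<longlonglongrightarrow> 0"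
    and a: "a \<in> I"
  shows "(\<lambda>k. z k a) \<longlonglongrightarrow> 0"
proof -
  have delta: "(\<Sum>b\<in>I. P 0 a b * f b) = f a" if "a \<in> I" for a f
  proof -
    have "(\<Sum>b\<in>I. P 0 a b * f b) = (\<Sum>b\<in>I. if a = b then f b else 0)"
      by (rule sum.cong) (use P0 that in auto)
    also have "\<dots> = f a" using fin that by simp
    finally show ?thesis .
  qed
  have form: "\<forall>a\<in>I. z k a = (\<Sum>b\<in>I. P k a b * z 0 b) + (\<Sum>j<k. \<Sum>b\<in>I. P (k - Suc j) a b * u j b)" for k
  proof (induction k)
    case 0 then show ?case using delta by simp
  next
    case (Suc k)
    show ?case
    proof
      fix a assume a: "a \<in> I"
      have "z (Suc k) a = (\<Sum>c\<in>I. M a c * ((\<Sum>b\<in>I. P k c b * z 0 b) + (\<Sum>j<k. \<Sum>b\<in>I. P (k - Suc j) c b * u j b))) + u k a"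
        using dyn[OF a] Suc by simp
      also have "\<dots> = (\<Sum>c\<in>I. M a c * (\<Sum>b\<in>I. P k c b * z 0 b)) + (\<Sum>j<k. (\<Sum>c\<in>I. M a c * (\<Sum>b\<in>I. P (k - Suc j) c b * u j b))) + u k a"
      proof -
        have h: "(\<Sum>c\<in>I. M a c * (\<Sum>j<k. G j c)) = (\<Sum>j<k. \<Sum>c\<in>I. M a c * G j c)" for G
          by (simp add: sum_distrib_left) (rule sum.swap)
        show ?thesis by (simp only: distrib_left sum.distrib h)
      qed
      also have "\<dots> = (\<Sum>b\<in>I. P (Suc k) a b * z 0 b) + (\<Sum>j<k. \<Sum>b\<in>I. P (Suc k - Suc j) a b * u j b) + (\<Sum>b\<in>I. P (Suc k - Suc k) a b * u k b)"
      proof -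
        have e1: "(\<Sum>c\<in>I. M a c * (\<Sum>b\<in>I. P k c b * z 0 b)) = (\<Sum>b\<in>I. P (Suc k) a b * z 0 b)"
          unfolding swap_sum_aux using PS[OF a] by (intro sum.cong) auto
        have e2: "(\<Sum>c\<in>I. M a c * (\<Sum>b\<in>I. P (k - Suc j) c b * u j b)) = (\<Sum>b\<in>I. P (Suc k - Suc j) a b * u j b)"
          if "j < k" for j
        proof -
          have "Suc k - Suc j = Suc (k - Suc j)" using that by simp
          then show ?thesis unfolding swap_sum_aux using PS[OF a] by (intro sum.cong) auto
        qed
        show ?thesis using e1 e2 delta[OF a, of "u k"] by simp
      qed
      also have "\<dots> = (\<Sum>b\<in>I. P (Suc k) a b * z 0 b) + (\<Sum>j<Suc k. \<Sum>b\<in>I. P (Suc k - Suc j) a b * u j b)"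
        by simp
      finally show "z (Suc k) a = (\<Sum>b\<in>I. P (Suc k) a b * z 0 b) + (\<Sum>j<Suc k. \<Sum>b\<in>I. P (Suc k - Suc j) a b * u j b)" .
    qed
  qed
  define S0 where "S0 = (\<Sum>b\<in>I. \<bar>z 0 b\<bar>)"
  define U where "U j = (\<Sum>b\<in>I. \<bar>u j b\<bar>)" for j
  define s where "s k = (\<Sum>j<k. r ^ (k - Suc j) * U j)" for k
  have Unn: "U j \<ge> 0" for j unfolding U_def by (intro sum_nonneg) auto
  have snn: "s k \<ge> 0" for k unfolding s_def using Unn r by (intro sum_nonneg) auto
  have gen: "\<bar>\<Sum>b\<in>I. P m a b * f b\<bar> \<le> C * r ^ m * (\<Sum>b\<in>I. \<bar>f b\<bar>)" for m f
  proof -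
    have "\<bar>\<Sum>b\<in>I. P m a b * f b\<bar> \<le> (\<Sum>b\<in>I. \<bar>P m a b\<bar> * \<bar>f b\<bar>)"
      unfolding abs_mult[symmetric] by (rule sum_abs)
    also have "\<dots> \<le> (\<Sum>b\<in>I. C * r ^ m * \<bar>f b\<bar>)"
      using bnd[OF a] by (intro sum_mono mult_right_mono) auto
    finally show ?thesis by (simp add: sum_distrib_left)
  qed
  have bound: "\<bar>z k a\<bar> \<le> C * r ^ k * S0 + C * s k" for k
  proof -
    have "\<bar>z k a\<bar> \<le> \<bar>\<Sum>b\<in>I. P k a b * z 0 b\<bar> + (\<Sum>j<k. \<bar>\<Sum>b\<in>I. P (k - Suc j) a b * u j b\<bar>)"
      unfolding form[of k, rule_format, OF a] by (rule order.trans[OF abs_triangle_ineq add_left_mono[OF sum_abs]])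
    also have "\<dots> \<le> C * r ^ k * S0 + (\<Sum>j<k. C * r ^ (k - Suc j) * U j)"
      unfolding S0_def U_def by (intro add_mono gen sum_mono)
    finally show ?thesis unfolding s_def by (simp add: sum_distrib_left mult.assoc)
  qed
  have srec: "\<bar>s (Suc k)\<bar> \<le> r * \<bar>s k\<bar> + U k" for k
  proof -
    have "s (Suc k) = (\<Sum>j<k. r ^ (Suc k - Suc j) * U j) + U k" unfolding s_def by simp
    also have "(\<Sum>j<k. r ^ (Suc k - Suc j) * U j) = r * s k" unfolding s_def sum_distrib_left
    proof (intro sum.cong refl)
      fix j assume "j \<in> {..<k}"
      then have "Suc k - Suc j = Suc (k - Suc j)" by auto
      then show "r ^ (Suc k - Suc j) * U j = r * (r ^ (k - Suc j) * U j)" by simp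
    qed
    finally show ?thesis using snn[of k] snn[of "Suc k"] by simp
  qed
  have Ulim: "U \<longlonglongrightarrow> 0"
  proof -
    have "(\<lambda>j. \<Sum>b\<in>I. \<bar>u j b\<bar>) \<longlonglongrightarrow> (\<Sum>b\<in>I. \<bar>0::real\<bar>)"
      by (intro tendsto_sum tendsto_rabs u)
    then show ?thesis unfolding U_def by simp
  qed
  have slim: "s \<longlonglongrightarrow> 0" by (rule scalar_conv[OF r srec Ulim])
  have "(\<lambda>k. C * r ^ k * S0 + C * s k) \<longlonglongrightarrow> C * 0 * S0 + C * 0"
    by (intro tendsto_add tendsto_mult tendsto_const slim LIMSEQ_power_zero) (use r in auto)
  then have g0: "(\<lambda>k. C * r ^ k * S0 + C * s k) \<longlonglongrightarrow> 0" by simp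
  show ?thesis
  proof (rule tendsto_sandwich[of "\<lambda>k. - (C * r ^ k * S0 + C * s k)" _ _ "\<lambda>k. C * r ^ k * S0 + C * s k"])
    show "\<forall>\<^sub>F n in sequentially. - (C * r ^ n * S0 + C * s n) \<le> z n a"
      using bound by (intro always_eventually allI) (smt (verit))
    show "\<forall>\<^sub>F n in sequentially. z n a \<le> C * r ^ n * S0 + C * s n"
      using bound by (auto intro!: always_eventually simp: abs_le_iff)
    show "(\<lambda>k. - (C * r ^ k * S0 + C * s k)) \<longlonglongrightarrow> 0" using tendsto_minus[OF g0] by simp
  qed (rule g0)
qed



lemma mv_sum: assumes "A \<in> carrier_mat r c" "v \<in> carrier_vec c" "i < r"
  shows "(A *\<^sub>v v) $ i = (\<Sum>j<c. A $$ (i,j) * v $ j)"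
  using assms by (auto simp: scalar_prod_def atLeast0LessThan intro!: sum.cong)

lemma cmat_carrier[simp]: "M \<in> carrier_mat n m \<Longrightarrow> cmat M \<in> carrier_mat n m"
  unfolding cmat_def by simp

lemma cmat_pow: "M \<in> carrier_mat n n \<Longrightarrow> cmat (M ^\<^sub>m k) = cmat M ^\<^sub>m k"
  unfolding cmat_def by (rule of_real_hom.mat_hom_pow)

lemma smult_pow_mat: fixes M :: "'a::comm_semiring_1 mat" assumes "M \<in> carrier_mat n n"
  shows "(c \<cdot>\<^sub>m M) ^\<^sub>m k = (c ^ k) \<cdot>\<^sub>m (M ^\<^sub>m k)"
proof (induction k)
  case 0 then show ?case using assms by (auto intro!: eq_matI)
next
  case (Suc k)
  have "(c \<cdot>\<^sub>m M) ^\<^sub>m Suc k = ((c ^ k) \<cdot>\<^sub>m (M ^\<^sub>m k)) * (c \<cdot>\<^sub>m M)" using Suc by simp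
  also have "\<dots> = (c ^ k) \<cdot>\<^sub>m ((M ^\<^sub>m k) * (c \<cdot>\<^sub>m M))"
    by (rule mult_smult_assoc_mat[of "M ^\<^sub>m k" n n "c \<cdot>\<^sub>m M" n]) (use assms in auto)
  also have "(M ^\<^sub>m k) * (c \<cdot>\<^sub>m M) = c \<cdot>\<^sub>m ((M ^\<^sub>m k) * M)"
    by (rule mult_smult_distrib[of "M ^\<^sub>m k" n n M n]) (use assms in auto)
  moreover have "c^k \<cdot>\<^sub>m (c \<cdot>\<^sub>m X) = (c^Suc k) \<cdot>\<^sub>m X" for X :: "'a mat"
    by (rule eq_matI) (auto simp: algebra_simps)
  ultimately show ?case by simp
qed

lemma spec_geom:
  assumes M: "M \<in> carrier_mat n n" and r: "0 < r"
    and ev: "\<And>e. eigenvalue (cmat M) e \<Longrightarrow> cmod e < r"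
  shows "\<exists>C. \<forall>k i j. i < n \<longrightarrow> j < n \<longrightarrow> \<bar>(M ^\<^sub>m k) $$ (i,j)\<bar> \<le> C * r^k"
proof (cases "n = 0")
  case True then show ?thesis by (intro exI[of _ 0]) auto
next
  case False
  then have n: "n > 0" by auto
  define A where "A = cmat M"
  have A: "A \<in> carrier_mat n n" unfolding A_def using M by simp
  define B where "B = cmat ((1/r) \<cdot>\<^sub>m M)"
  have B: "B \<in> carrier_mat n n" unfolding B_def using M by simp
  have Bent: "B $$ (i,j) = complex_of_real (1/r) * A $$ (i,j)" if "i < n" "j < n" for i j
    using that M unfolding B_def A_def cmat_def by simp
  have Bv: "(B *\<^sub>v w) $ i = complex_of_real (1/r) * (A *\<^sub>v w) $ i" if "w \<in> carrier_vec n" "i < n" for w i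
  proof -
    have "(B *\<^sub>v w) $ i = (\<Sum>j<n. B $$ (i,j) * w $ j)"
      by (rule mv_sum[OF B that(1) that(2)])
    also have "\<dots> = (\<Sum>j<n. complex_of_real (1/r) * (A $$ (i,j) * w $ j))"
      using Bent that by (intro sum.cong) auto
    also have "\<dots> = complex_of_real (1/r) * (A *\<^sub>v w) $ i"
      using mv_sum[OF A that(1) that(2)] by (simp add: sum_distrib_left)
    finally show ?thesis .
  qed
  have "spectral_radius B < 1"
  proof -
    from spectral_radius_mem_max(1)[OF B n] obtain e' where e': "e' \<in> spectrum B"
      "spectral_radius B = cmod e'" by auto
    then obtain v where v: "v \<in> carrier_vec n" "v \<noteq> 0\<^sub>v n" "B *\<^sub>v v = e' \<cdot>\<^sub>v v"
      unfolding spectrum_def eigenvalue_def eigenvector_def using B by auto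
    have "A *\<^sub>v v = (complex_of_real r * e') \<cdot>\<^sub>v v"
    proof (rule eq_vecI)
      fix i assume i: "i < dim_vec ((complex_of_real r * e') \<cdot>\<^sub>v v)"
      then have i: "i < n" using v by simp
      have "(B *\<^sub>v v) $ i = complex_of_real (1/r) * (A *\<^sub>v v) $ i"
        by (rule Bv[OF v(1) i])
      then have "(A *\<^sub>v v) $ i = complex_of_real r * (B *\<^sub>v v) $ i"
        using r by (simp add: of_real_divide field_simps)
      then show "(A *\<^sub>v v) $ i = ((complex_of_real r * e') \<cdot>\<^sub>v v) $ i"
        using v i by simp
    qed (use A v in auto)
    then have "eigenvalue A (complex_of_real r * e')"
      unfolding eigenvalue_def eigenvector_def using A v by auto
    then have "cmod (complex_of_real r * e') < r" using ev unfolding A_def by auto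
    then have "r * cmod e' < r" using r by (simp add: norm_mult)
    then have "cmod e' < 1" using r by simp
    then show ?thesis using e' by simp
  qed
  from spectral_radius_jnf_norm_bound_less_1_upper_triangular[OF B this]
  obtain c where c: "\<And>k. norm_bound (B ^\<^sub>m k) c" by auto
  show ?thesis
  proof (intro exI allI impI)
    fix k i j assume ij: "i < n" "j < n"
    have "B ^\<^sub>m k = cmat (((1/r) \<cdot>\<^sub>m M) ^\<^sub>m k)" unfolding B_def
      using M by (intro cmat_pow[symmetric, of _ n]) simp
    also have "\<dots> = cmat (((1/r)^k) \<cdot>\<^sub>m (M ^\<^sub>m k))" using smult_pow_mat[OF M] by simp
    finally have "(B ^\<^sub>m k) $$ (i,j) = complex_of_real ((1/r)^k * (M ^\<^sub>m k) $$ (i,j))"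
      using ij M unfolding cmat_def by simp
    moreover have "norm ((B ^\<^sub>m k) $$ (i,j)) \<le> c" using c[of k] ij B unfolding norm_bound_def by auto
    ultimately have "(1/r)^k * \<bar>(M ^\<^sub>m k) $$ (i,j)\<bar> \<le> c"
      using r by (simp add: abs_mult norm_mult norm_power norm_divide)
    then show "\<bar>(M ^\<^sub>m k) $$ (i,j)\<bar> \<le> c * r ^ k" using r
      by (simp add: field_simps power_divide)
  qed
qed

lemma schur_geom:
  assumes st: "schur_stable M" and M: "M \<in> carrier_mat n n"
  shows "\<exists>C r. 0 \<le> r \<and> r < 1 \<and> (\<forall>k i j. i < n \<longrightarrow> j < n \<longrightarrow> \<bar>(M ^\<^sub>m k) $$ (i,j)\<bar> \<le> C * r^k)"
proof (cases "n = 0")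
  case True then show ?thesis by (intro exI[of _ 0]) auto
next
  case False
  then have n: "n > 0" by auto
  define A where "A = cmat M"
  have A: "A \<in> carrier_mat n n" unfolding A_def using M by simp
  define \<rho> where "\<rho> = spectral_radius A"
  from spectral_radius_mem_max(1)[OF A n] obtain e where e: "e \<in> spectrum A" "\<rho> = cmod e"
    unfolding \<rho>_def by auto
  have \<rho>1: "\<rho> < 1" using st e unfolding schur_stable_def spectrum_def A_def by auto
  have \<rho>0: "\<rho> \<ge> 0" using e by auto
  define r where "r = (1 + \<rho>) / 2"
  have r: "0 < r" "r < 1" "\<rho> < r" using \<rho>0 \<rho>1 unfolding r_def by auto
  have "cmod e' < r" if "eigenvalue (cmat M) e'" for e'
  proof -
    have "cmod e' \<le> \<rho>" unfolding \<rho>_def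
      by (rule spectral_radius_mem_max(2)[OF A n]) (use that in \<open>auto simp: spectrum_def A_def\<close>)
    then show ?thesis using r by simp
  qed
  from spec_geom[OF M r(1) this] obtain C where "\<forall>k i j. i < n \<longrightarrow> j < n \<longrightarrow> \<bar>(M ^\<^sub>m k) $$ (i,j)\<bar> \<le> C * r^k"
    by blast
  then show ?thesis using r by (intro exI[of _ C] exI[of _ r]) auto
qed



lemma pow_mat_Suc_left: assumes "A \<in> carrier_mat n n"
  shows "A ^\<^sub>m Suc k = A * A ^\<^sub>m k"
proof (induction k)
  case 0 then show ?case using assms by simp
next
  case (Suc k)
  have "A ^\<^sub>m Suc (Suc k) = (A * A ^\<^sub>m k) * A" using Suc by simp
  also have "\<dots> = A * (A ^\<^sub>m k * A)" using assms by (intro assoc_mult_mat[of _ n n _ n _ n]) auto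
  finally show ?case by simp
qed

lemma mm_sum: assumes "A \<in> carrier_mat r c" "B \<in> carrier_mat c d" "i < r" "j < d"
  shows "(A * B) $$ (i,j) = (\<Sum>l<c. A $$ (i,l) * B $$ (l,j))"
  using assms by (auto simp: scalar_prod_def atLeast0LessThan intro!: sum.cong)

lemma vec_conv:
  fixes M :: "real mat"
  assumes M: "M \<in> carrier_mat n n"
    and bnd: "\<And>k i j. i < n \<Longrightarrow> j < n \<Longrightarrow> \<bar>(M ^\<^sub>m k) $$ (i,j)\<bar> \<le> C * r^k"
    and r: "0 \<le> r" "r < 1"
    and vc: "\<And>k. v k \<in> carrier_vec n" and uc: "\<And>k. u k \<in> carrier_vec n"
    and dyn: "\<And>k. v (Suc k) = M *\<^sub>v v k + u k"
    and u: "\<And>l. l < n \<Longrightarrow> (\<lambda>k. u k $ l) \<longlonglongrightarrow> 0"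
    and l: "l < n"
  shows "(\<lambda>k. v k $ l) \<longlonglongrightarrow> 0"
proof (rule kernel_conv[where I = "{..<n}" and M = "\<lambda>a b. M $$ (a,b)" and P = "\<lambda>m a b. (M ^\<^sub>m m) $$ (a,b)"
      and z = "\<lambda>k a. v k $ a" and u = "\<lambda>k a. u k $ a" and C = C and r = r])
  show "(M ^\<^sub>m Suc m) $$ (a, b) = (\<Sum>c\<in>{..<n}. M $$ (a, c) * (M ^\<^sub>m m) $$ (c, b))"
    if "a \<in> {..<n}" "b \<in> {..<n}" for m a b
    unfolding pow_mat_Suc_left[OF M] using that M by (intro mm_sum[of _ n n _ n]) auto
  show "v (Suc k) $ a = (\<Sum>c\<in>{..<n}. M $$ (a, c) * v k $ c) + u k $ a" if "a \<in> {..<n}" for k a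
  proof -
    have "dim_vec (u k) = n" using uc[of k] by auto
    then show ?thesis unfolding dyn using that M vc[of k] mv_sum[OF M vc[of k], of a] by simp
  qed
qed (use M bnd r u l in auto)

lemma vec_conv_schur:
  fixes M :: "real mat"
  assumes M: "M \<in> carrier_mat n n" and st: "schur_stable M"
    and vc: "\<And>k. v k \<in> carrier_vec n" and uc: "\<And>k. u k \<in> carrier_vec n"
    and dyn: "\<And>k. v (Suc k) = M *\<^sub>v v k + u k"
    and u: "\<And>l. l < n \<Longrightarrow> (\<lambda>k. u k $ l) \<longlonglongrightarrow> 0"
    and l: "l < n"
  shows "(\<lambda>k. v k $ l) \<longlonglongrightarrow> 0"
proof -
  from schur_geom[OF st M] obtain C r where "0 \<le> r" "r < 1"
    "\<And>k i j. i < n \<Longrightarrow> j < n \<Longrightarrow> \<bar>(M ^\<^sub>m k) $$ (i,j)\<bar> \<le> C * r^k" by blast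
  from vec_conv[OF M this(3) this(1,2) vc uc dyn u l] show ?thesis .
qed



fun Dit :: "nat \<Rightarrow> (nat \<Rightarrow> nat \<Rightarrow> real) \<Rightarrow> nat \<Rightarrow> (nat \<Rightarrow> real) \<Rightarrow> nat \<Rightarrow> real" where
  "Dit N D 0 g i = g i"
| "Dit N D (Suc m) g i = (\<Sum>l<N. D i l * Dit N D m g l)"

definition Dpow :: "nat \<Rightarrow> (nat \<Rightarrow> nat \<Rightarrow> real) \<Rightarrow> nat \<Rightarrow> nat \<Rightarrow> nat \<Rightarrow> real" where
  "Dpow N D m i j = Dit N D m (\<lambda>l. if l = j then 1 else 0) i"

lemma Dit_comp: "Dit N D (m1 + m2) g i = Dit N D m1 (Dit N D m2 g) i"
  by (induction m1 arbitrary: i) auto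

lemma Dit_scale: "Dit N D m (\<lambda>l. c * g l) i = c * Dit N D m g i"
  by (induction m arbitrary: i) (auto simp: sum_distrib_left algebra_simps)

context
  fixes N :: nat and D :: "nat \<Rightarrow> nat \<Rightarrow> real"
  assumes nn: "\<And>i j. i < N \<Longrightarrow> j < N \<Longrightarrow> D i j \<ge> 0"
    and rs: "\<And>i. i < N \<Longrightarrow> (\<Sum>j<N. D i j) \<le> 1"
begin

lemma Dit_nonneg: "(\<And>l. l < N \<Longrightarrow> g l \<ge> 0) \<Longrightarrow> i < N \<Longrightarrow> Dit N D m g i \<ge> 0"
  by (induction m arbitrary: i) (auto intro!: sum_nonneg mult_nonneg_nonneg nn)

lemma Dit_mono: "(\<And>l. l < N \<Longrightarrow> g l \<le> g' l) \<Longrightarrow> i < N \<Longrightarrow> Dit N D m g i \<le> Dit N D m g' i"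
  by (induction m arbitrary: i) (auto intro!: sum_mono mult_left_mono nn)

abbreviation "w m i \<equiv> Dit N D m (\<lambda>_. 1) i"

lemma w_le1: "i < N \<Longrightarrow> w m i \<le> 1"
proof (induction m arbitrary: i)
  case (Suc m)
  have "w (Suc m) i \<le> (\<Sum>l<N. D i l * 1)"
    using Suc nn by (auto intro!: sum_mono mult_left_le)
  also have "\<dots> \<le> 1" using rs Suc by simp
  finally show ?case .
qed simp

lemma w_Suc_le: "i < N \<Longrightarrow> w (Suc m) i \<le> w m i"
proof -
  assume i: "i < N"
  have "w (Suc m) i = Dit N D (m + 1) (\<lambda>_. 1) i" by simp
  also have "\<dots> = Dit N D m (w 1) i" by (rule Dit_comp)
  also have "\<dots> \<le> w m i" using i w_le1[of _ 1] by (intro Dit_mono) auto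
  finally show ?thesis .
qed

lemma w_antimono: assumes "i < N" "m \<le> m'" shows "w m' i \<le> w m i"
  using assms(2)
proof (induction m')
  case 0 then show ?case by simp
next
  case (Suc m')
  show ?case
  proof (cases "m \<le> m'")
    case True then show ?thesis using Suc w_Suc_le[OF assms(1), of m'] by linarith
  next
    case False then have "m = Suc m'" using Suc by simp
    then show ?thesis by simp
  qed
qed

lemma Dpow_bound: "i < N \<Longrightarrow> j < N \<Longrightarrow> \<bar>Dpow N D m i j\<bar> \<le> w m i"
proof -
  assume ij: "i < N" "j < N"
  have "Dpow N D m i j \<ge> 0" unfolding Dpow_def using ij by (intro Dit_nonneg) auto
  moreover have "Dpow N D m i j \<le> w m i" unfolding Dpow_def using ij by (intro Dit_mono) auto
  ultimately show ?thesis by simp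
qed

lemma w_strict_step:
  assumes "i < N" "j < N" "D i j > 0" "w t j < 1"
  shows "w (Suc t) i < 1"
proof -
  have "w (Suc t) i = (\<Sum>l<N. D i l * w t l)" by simp
  also have "\<dots> < (\<Sum>l<N. D i l * 1)"
  proof (rule sum_strict_mono_ex1)
    show "\<forall>l\<in>{..<N}. D i l * w t l \<le> D i l * 1"
      using assms(1) w_le1 nn by (auto intro!: mult_left_le)
    show "\<exists>l\<in>{..<N}. D i l * w t l < D i l * 1"
      using assms by (intro bexI[of _ j]) auto
  qed simp
  also have "\<dots> \<le> 1" using rs assms(1) by simp
  finally show ?thesis .
qed

lemma Dpow_geom:
  assumes reach: "\<And>i. i < N \<Longrightarrow> \<exists>t. w t i < 1"
  shows "\<exists>C r. 0 \<le> r \<and> r < 1 \<and> (\<forall>m i j. i < N \<longrightarrow> j < N \<longrightarrow> \<bar>Dpow N D m i j\<bar> \<le> C * r ^ m)"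
proof (cases "N = 0")
  case True then show ?thesis by (intro exI[of _ 0]) auto
next
  case False
  from reach obtain tf where tf: "\<And>i. i < N \<Longrightarrow> w (tf i) i < 1" by metis
  define T where "T = (\<Sum>i<N. tf i)"
  have wT: "w T i < 1" if "i < N" for i
  proof -
    have le: "tf i \<le> T" unfolding T_def using that by (intro member_le_sum) auto
    show ?thesis using w_antimono[OF that le] tf[OF that] by linarith
  qed
  have T0: "T > 0"
  proof (rule ccontr)
    assume "\<not> T > 0" then have "T = 0" by simp
    then show False using wT[of 0] False by simp
  qed
  define \<rho>0 where "\<rho>0 = Max ((\<lambda>i. w T i) ` {..<N})"
  have \<rho>0mem: "\<rho>0 \<in> (\<lambda>i. w T i) ` {..<N}" unfolding \<rho>0_def using False by (intro Max_in) auto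
  have \<rho>0ge: "w T i \<le> \<rho>0" if "i < N" for i unfolding \<rho>0_def using that by (intro Max_ge) auto
  have \<rho>0lt: "\<rho>0 < 1" using \<rho>0mem wT by auto
  define \<rho>1 where "\<rho>1 = max \<rho>0 (1/2)"
  have \<rho>1: "0 < \<rho>1" "\<rho>1 < 1" "\<rho>0 \<le> \<rho>1" unfolding \<rho>1_def using \<rho>0lt by auto
  have geomq: "w (T * q) i \<le> \<rho>1 ^ q" if "i < N" for q i
    using that
  proof (induction q arbitrary: i)
    case 0 then show ?case by simp
  next
    case (Suc q)
    have "w (T * Suc q) i = Dit N D T (w (T * q)) i" using Dit_comp[of N D T "T * q"] by simp
    also have "\<dots> \<le> Dit N D T (\<lambda>l. \<rho>1 ^ q * 1) i" using Suc by (intro Dit_mono) auto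
    also have "\<dots> = \<rho>1 ^ q * w T i" by (rule Dit_scale)
    also have "\<dots> \<le> \<rho>1 ^ q * \<rho>1" using \<rho>0ge[OF Suc(2)] \<rho>1 by (intro mult_left_mono) auto
    finally show ?case by (simp only: power_Suc2)
  qed
  define \<sigma> where "\<sigma> = root T \<rho>1"
  have \<sigma>T: "\<sigma> ^ T = \<rho>1" unfolding \<sigma>_def using T0 \<rho>1 by (simp add: real_root_pow_pos2)
  have \<sigma>0: "0 < \<sigma>" unfolding \<sigma>_def using T0 \<rho>1 by simp
  have \<sigma>1: "\<sigma> < 1" unfolding \<sigma>_def using T0 \<rho>1 by (simp add: real_root_lt_1_iff)
  have main: "\<bar>Dpow N D m i j\<bar> \<le> 1 / \<rho>1 * \<sigma> ^ m" if ij: "i < N" "j < N" for m i j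
  proof -
    define q where "q = m div T"
    have "T * q \<le> m" unfolding q_def by simp
    have m_eq: "m = T * q + m mod T" unfolding q_def by simp
    have "m mod T < T" using T0 by simp
    then have mq: "m \<le> T * Suc q" using m_eq by (simp only: mult_Suc_right)
    have "\<bar>Dpow N D m i j\<bar> \<le> w m i" by (rule Dpow_bound[OF ij])
    also have "\<dots> \<le> w (T * q) i" using w_antimono[OF ij(1) \<open>T * q \<le> m\<close>] .
    also have "\<dots> \<le> \<rho>1 ^ q" by (rule geomq[OF ij(1)])
    also have "\<dots> = (1/\<rho>1) * \<sigma> ^ (T * Suc q)"
    proof -
      have "\<sigma> ^ (T * Suc q) = \<rho>1 ^ Suc q" using \<sigma>T by (simp only: power_mult)
      then show ?thesis using \<rho>1 by simp
    qed
    also have "\<dots> \<le> (1/\<rho>1) * \<sigma> ^ m" using \<rho>1 \<sigma>0 \<sigma>1 mq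
      by (intro mult_left_mono power_decreasing) auto
    finally show "\<bar>Dpow N D m i j\<bar> \<le> 1 / \<rho>1 * \<sigma> ^ m" .
  qed
  show ?thesis using main \<sigma>0 \<sigma>1 by (intro exI[of _ "1/\<rho>1"] exI[of _ \<sigma>]) auto
qed

end



lemma din_nonneg: "weights_ok N a \<Longrightarrow> i < N \<Longrightarrow> din N a i \<ge> 0"
  unfolding din_def weights_ok_def by (auto intro!: sum_nonneg)

lemma iota_01: "iota R i = 0 \<or> iota R i = 1" unfolding iota_def by auto

lemma Lbar_alt: "weights_ok N a \<Longrightarrow> i < N \<Longrightarrow> j < N \<Longrightarrow>
    Lbar N R a i j = (if i = j then din N a i + iota R i else 0) - a i j"
  unfolding Lbar_def weights_ok_def by auto

lemma Lbar_rowsum: assumes "weights_ok N a" "i < N"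
  shows "(\<Sum>j<N. Lbar N R a i j) = iota R i"
proof -
  have "(\<Sum>j<N. Lbar N R a i j) = (\<Sum>j<N. (if i = j then din N a i + iota R i else 0) - a i j)"
    using assms by (intro sum.cong) (auto simp: Lbar_alt)
  also have "\<dots> = (din N a i + iota R i) - din N a i"
    using assms by (simp add: sum_subtractf din_def)
  finally show ?thesis by simp
qed

lemma Dbar_nonneg: assumes "weights_ok N a" "i < N" "j < N" shows "Dbar N R a i j \<ge> 0"
proof -
  have d: "din N a i \<ge> 0" using din_nonneg assms by auto
  show ?thesis
  proof (cases "i = j")
    case True
    have "(din N a i + iota R i) / (2 + din N a i) \<le> 1"
      using d iota_01[of R i] by (auto simp: divide_le_eq_1)
    then show ?thesis using True unfolding Dbar_def Lbar_def by simp
  next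
    case False
    then show ?thesis using assms d unfolding Dbar_def Lbar_def weights_ok_def by auto
  qed
qed

lemma Dbar_rowsum: assumes "weights_ok N a" "i < N"
  shows "(\<Sum>j<N. Dbar N R a i j) = 1 - iota R i / (2 + din N a i)"
proof -
  have "(\<Sum>j<N. Dbar N R a i j) = (\<Sum>j<N. (if i = j then 1 else 0)) - (\<Sum>j<N. Lbar N R a i j) / (2 + din N a i)"
    unfolding Dbar_def by (simp add: sum_subtractf sum_divide_distrib)
  also have "\<dots> = 1 - iota R i / (2 + din N a i)" using assms Lbar_rowsum[OF assms] by simp
  finally show ?thesis .
qed

lemma Dbar_rowsum_le: assumes "weights_ok N a" "i < N"
  shows "(\<Sum>j<N. Dbar N R a i j) \<le> 1"
proof -
  have "iota R i / (2 + din N a i) \<ge> 0" using din_nonneg[OF assms] iota_01[of R i] by auto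
  then show ?thesis using Dbar_rowsum[OF assms] by simp
qed

lemma Dbar_geom:
  assumes g: "in_graph_set N R a"
  shows "\<exists>C r. 0 \<le> r \<and> r < 1 \<and> (\<forall>m i j. i < N \<longrightarrow> j < N \<longrightarrow> \<bar>Dpow N (Dbar N R a) m i j\<bar> \<le> C * r ^ m)"
proof -
  have wo: "weights_ok N a" and RN: "R \<subseteq> {..<N}" and reach: "\<And>i. i < N \<Longrightarrow> \<exists>c\<in>R. (edge N a)\<^sup>*\<^sup>* c i"
    using g unfolding in_graph_set_def by auto
  let ?D = "Dbar N R a"
  have nn: "\<And>i j. i < N \<Longrightarrow> j < N \<Longrightarrow> ?D i j \<ge> 0" using Dbar_nonneg[OF wo] by auto
  have rs: "\<And>i. i < N \<Longrightarrow> (\<Sum>j<N. ?D i j) \<le> 1" using Dbar_rowsum_le[OF wo] by auto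
  have "\<exists>t. Dit N ?D t (\<lambda>_. 1) i < 1" if "i < N" for i
  proof -
    from reach[OF that] obtain c where c: "c \<in> R" "(edge N a)\<^sup>*\<^sup>* c i" by auto
    from c(2) show ?thesis
    proof (induction rule: rtranclp_induct)
      case base
      have cN: "c < N" using c RN by auto
      have "Dit N ?D 1 (\<lambda>_. 1) c = (\<Sum>j<N. ?D c j)" by simp
      also have "\<dots> = 1 - 1 / (2 + din N a c)" using Dbar_rowsum[OF wo cN] c by (simp add: iota_def)
      also have "\<dots> < 1" using din_nonneg[OF wo cN] by simp
      finally show ?case by blast
    next
      case (step y z)
      then obtain t where t: "Dit N ?D t (\<lambda>_. 1) y < 1" by auto
      have e: "y < N" "z < N" "a z y > 0" using step(2) unfolding edge_def by auto
      have "y \<noteq> z" using e wo unfolding weights_ok_def by auto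
      then have "?D z y > 0" using e din_nonneg[OF wo e(2)] unfolding Dbar_def Lbar_def by auto
      from w_strict_step[OF nn rs e(2) e(1) this t] show ?case by blast
    qed
  qed
  from Dpow_geom[OF nn rs this] show ?thesis by blast
qed



lemma kron_conv:
  fixes Ac :: "real mat" and \<delta> f :: "nat \<Rightarrow> nat \<Rightarrow> real vec"
  assumes Ac: "Ac \<in> carrier_mat nr nr"
    and Ac_ev: "\<And>e. eigenvalue (cmat Ac) e \<Longrightarrow> cmod e \<le> 1"
    and g: "in_graph_set N R a"
    and \<delta>c: "\<And>k i. i < N \<Longrightarrow> \<delta> k i \<in> carrier_vec nr"
    and fc: "\<And>k i. i < N \<Longrightarrow> f k i \<in> carrier_vec nr"
    and dyn: "\<And>k i. i < N \<Longrightarrow> \<delta> (Suc k) i =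
        Ac *\<^sub>v vec nr (\<lambda>l. \<Sum>j<N. Dbar N R a i j * \<delta> k j $ l) + f k i"
    and f0: "\<And>i l. i < N \<Longrightarrow> l < nr \<Longrightarrow> (\<lambda>k. f k i $ l) \<longlonglongrightarrow> 0"
    and il: "i < N" "l < nr"
  shows "(\<lambda>k. \<delta> k i $ l) \<longlonglongrightarrow> 0"
proof -
  let ?D = "Dbar N R a"
  from Dbar_geom[OF g] obtain C1 \<sigma> where \<sigma>: "0 \<le> \<sigma>" "\<sigma> < 1"
    and C1: "\<And>m i j. i < N \<Longrightarrow> j < N \<Longrightarrow> \<bar>Dpow N ?D m i j\<bar> \<le> C1 * \<sigma> ^ m" by blast
  define s where "s = 2 / (1 + \<sigma>)"
  have s: "s > 1" "\<sigma> * s < 1" "0 \<le> \<sigma> * s" unfolding s_def using \<sigma> by (auto simp: field_simps)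
  have "cmod e < s" if "eigenvalue (cmat Ac) e" for e using Ac_ev[OF that] s by simp
  from spec_geom[OF Ac _ this] s obtain C2 where
    C2: "\<And>k i j. i < nr \<Longrightarrow> j < nr \<Longrightarrow> \<bar>(Ac ^\<^sub>m k) $$ (i,j)\<bar> \<le> C2 * s^k" by auto
  define I where "I = {..<N} \<times> {..<nr}"
  define MM where "MM = (\<lambda>p q. ?D (fst p) (fst q) * Ac $$ (snd p, snd q))"
  define PP where "PP = (\<lambda>m p q. Dpow N ?D m (fst p) (fst q) * (Ac ^\<^sub>m m) $$ (snd p, snd q))"
  define zz where "zz = (\<lambda>k p. \<delta> k (fst p) $ snd p)"
  define uu where "uu = (\<lambda>k p. f k (fst p) $ snd p)"
  have fin: "finite I" unfolding I_def by simp
  have ilI: "(i, l) \<in> I" unfolding I_def using il by simp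
  have r: "0 \<le> \<sigma> * s" "\<sigma> * s < 1" using s by auto
  have u: "(\<lambda>k. uu k p) \<longlonglongrightarrow> 0" if "p \<in> I" for p
    using that f0 unfolding I_def uu_def by auto
  have P0: "PP 0 p q = (if p = q then 1 else 0)" if "p \<in> I" "q \<in> I" for p q
    using that Ac unfolding Dpow_def PP_def I_def by (auto simp: prod_eq_iff)
  have bnd: "\<bar>PP m p q\<bar> \<le> C1 * C2 * (\<sigma> * s) ^ m" if "p \<in> I" "q \<in> I" for m p q
  proof -
    have "\<bar>PP m p q\<bar> \<le> (C1 * \<sigma> ^ m) * (C2 * s ^ m)"
      unfolding PP_def abs_mult using C1[of "fst p" "fst q" m] C2[of "snd p" "snd q" m] that
      unfolding I_def by (intro mult_mono) auto
    then show ?thesis by (simp add: power_mult_distrib algebra_simps)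
  qed
  have PS: "PP (Suc m) p q = (\<Sum>c\<in>I. MM p c * PP m c q)" if pI: "p \<in> I" and qI: "q \<in> I" for m p q
  proof -
    obtain i1 l1 where a: "p = (i1,l1)" "i1 < N" "l1 < nr" using pI unfolding I_def by (cases p) auto
    obtain j1 l2 where b: "q = (j1,l2)" "j1 < N" "l2 < nr" using qI unfolding I_def by (cases q) auto
    have "(\<Sum>c\<in>I. MM p c * PP m c q)
        = (\<Sum>c<N. \<Sum>c'<nr. (?D i1 c * Dpow N ?D m c j1) * (Ac $$ (l1, c') * (Ac ^\<^sub>m m) $$ (c', l2)))"
      unfolding I_def sum.cartesian_product' MM_def PP_def using a b by (simp add: algebra_simps)
    also have "\<dots> = (\<Sum>c<N. ?D i1 c * Dpow N ?D m c j1) * (\<Sum>c'<nr. Ac $$ (l1, c') * (Ac ^\<^sub>m m) $$ (c', l2))"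
      by (simp add: sum_product)
    also have "\<dots> = Dpow N ?D (Suc m) i1 j1 * (Ac ^\<^sub>m Suc m) $$ (l1, l2)"
      unfolding pow_mat_Suc_left[OF Ac] mm_sum[OF Ac pow_carrier_mat[OF Ac] a(3) b(3)]
      by (simp add: Dpow_def)
    finally show ?thesis using a b unfolding PP_def by simp
  qed
  have dyn': "zz (Suc k) p = (\<Sum>c\<in>I. MM p c * zz k c) + uu k p" if pI: "p \<in> I" for k p
  proof -
    obtain i1 l1 where a: "p = (i1,l1)" "i1 < N" "l1 < nr" using pI unfolding I_def by (cases p) auto
    have vc: "vec nr (\<lambda>l. \<Sum>j<N. ?D i1 j * \<delta> k j $ l) \<in> carrier_vec nr" by simp
    have "\<delta> (Suc k) i1 $ l1 = (\<Sum>l'<nr. Ac $$ (l1,l') * (\<Sum>j<N. ?D i1 j * \<delta> k j $ l')) + f k i1 $ l1"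
      unfolding dyn[OF a(2)] using fc[OF a(2), of k] mv_sum[OF Ac vc a(3)] a(3) by simp
    also have "(\<Sum>l'<nr. Ac $$ (l1,l') * (\<Sum>j<N. ?D i1 j * \<delta> k j $ l')) = (\<Sum>c\<in>I. MM p c * zz k c)"
      unfolding I_def sum.cartesian_product' a(1) sum_distrib_left MM_def zz_def
      by (subst sum.swap) (simp add: algebra_simps)
    finally show ?thesis using a unfolding zz_def uu_def by simp
  qed
  from kernel_conv[OF fin P0 PS bnd r dyn' u ilI] show ?thesis unfolding zz_def by simp
qed



definition lc :: "nat \<Rightarrow> (nat \<Rightarrow> real) \<Rightarrow> (nat \<Rightarrow> real vec) \<Rightarrow> nat \<Rightarrow> real vec" where
  "lc N c X n = vec n (\<lambda>l. \<Sum>j<N. c j * X j $ l)"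

lemma lc_carrier[simp]: "lc N c X n \<in> carrier_vec n" "dim_vec (lc N c X n) = n"
  unfolding lc_def by auto

lemma lc_index[simp]: "l < n \<Longrightarrow> lc N c X n $ l = (\<Sum>j<N. c j * X j $ l)"
  unfolding lc_def by simp

lemma lc_mv: assumes M: "M \<in> carrier_mat r n" and X: "\<And>j. j < N \<Longrightarrow> X j \<in> carrier_vec n"
  shows "M *\<^sub>v lc N c X n = lc N c (\<lambda>j. M *\<^sub>v X j) r"
proof (rule eq_vecI)
  fix l assume "l < dim_vec (lc N c (\<lambda>j. M *\<^sub>v X j) r)"
  then have l: "l < r" by simp
  have "(M *\<^sub>v lc N c X n) $ l = (\<Sum>t<n. M $$ (l,t) * (\<Sum>j<N. c j * X j $ t))"
    using mv_sum[OF M lc_carrier(1) l] by simp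
  also have "\<dots> = (\<Sum>j<N. c j * (\<Sum>t<n. M $$ (l,t) * X j $ t))"
    by (simp add: sum_distrib_left algebra_simps) (rule sum.swap)
  also have "\<dots> = lc N c (\<lambda>j. M *\<^sub>v X j) r $ l"
    using l mv_sum[OF M X l] by simp
  finally show "(M *\<^sub>v lc N c X n) $ l = lc N c (\<lambda>j. M *\<^sub>v X j) r $ l" .
qed (use M in auto)

lemma lc_add: assumes "\<And>j. j < N \<Longrightarrow> X j \<in> carrier_vec n" "\<And>j. j < N \<Longrightarrow> Y j \<in> carrier_vec n"
  shows "lc N c (\<lambda>j. X j + Y j) n = lc N c X n + lc N c Y n"
proof (rule eq_vecI)
  fix i assume "i < dim_vec (lc N c X n + lc N c Y n)"
  then have i: "i < n" by simp
  have "(\<Sum>j<N. c j * (X j + Y j) $ i) = (\<Sum>j<N. c j * X j $ i + c j * Y j $ i)"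
  proof (rule sum.cong[OF refl])
    fix j assume "j \<in> {..<N}"
    then have "dim_vec (X j) = n" "dim_vec (Y j) = n" using assms by auto
    then show "c j * (X j + Y j) $ i = c j * X j $ i + c j * Y j $ i" using i by (simp add: distrib_left)
  qed
  then show "lc N c (\<lambda>j. X j + Y j) n $ i = (lc N c X n + lc N c Y n) $ i"
    using i by (simp add: sum.distrib)
qed simp

lemma lc_uminus: assumes "\<And>j. j < N \<Longrightarrow> X j \<in> carrier_vec n"
  shows "lc N c (\<lambda>j. - X j) n = - lc N c X n"
proof (rule eq_vecI)
  fix i assume "i < dim_vec (- lc N c X n)"
  then have i: "i < n" by simp
  have "(\<Sum>j<N. c j * (- X j) $ i) = (\<Sum>j<N. - (c j * X j $ i))"
  proof (rule sum.cong[OF refl])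
    fix j assume "j \<in> {..<N}"
    then have "dim_vec (X j) = n" using assms by auto
    then show "c j * (- X j) $ i = - (c j * X j $ i)" using i by simp
  qed
  then show "lc N c (\<lambda>j. - X j) n $ i = (- lc N c X n) $ i"
    using i by (simp add: sum_negf)
qed simp

lemma mat_carrier_self: "A \<in> carrier_mat (dim_row A) (dim_col A)" by auto

lemma mv_add_d: "dim_vec v = dim_col A \<Longrightarrow> dim_vec u = dim_col A \<Longrightarrow> A *\<^sub>v (v + u) = A *\<^sub>v v + A *\<^sub>v u"
  by (rule mult_add_distrib_mat_vec[OF mat_carrier_self carrier_vecI carrier_vecI])

lemma mv_minus_d: fixes A :: "'a::ring mat"
  shows "dim_vec v = dim_col A \<Longrightarrow> dim_vec u = dim_col A \<Longrightarrow> A *\<^sub>v (v - u) = A *\<^sub>v v - A *\<^sub>v u"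
  by (rule mult_minus_distrib_mat_vec[OF mat_carrier_self carrier_vecI carrier_vecI])

lemma mv_uminus_d: fixes A :: "'a::ring mat"
  shows "dim_vec v = dim_col A \<Longrightarrow> A *\<^sub>v (- v) = - (A *\<^sub>v v)"
  by (rule eq_vecI) auto

lemma matminus_mv_d: fixes A :: "'a::ring mat"
  shows "dim_row A = dim_row B \<Longrightarrow> dim_col A = dim_col B \<Longrightarrow> dim_vec v = dim_col A \<Longrightarrow> (A - B) *\<^sub>v v = A *\<^sub>v v - B *\<^sub>v v"
  by (rule minus_mult_distrib_mat_vec[OF mat_carrier_self _ carrier_vecI]) auto

lemma matmult_mv_d: "dim_col A = dim_row B \<Longrightarrow> dim_vec v = dim_col B \<Longrightarrow> (A * B) *\<^sub>v v = A *\<^sub>v (B *\<^sub>v v)"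
  by (rule assoc_mult_mat_vec[OF _ mat_carrier_self carrier_vecI]) auto

lemma mv_lim0:
  fixes A :: "real mat"
  assumes A: "A \<in> carrier_mat r c" and vc: "\<And>k. v k \<in> carrier_vec c"
    and v0: "\<And>j. j < c \<Longrightarrow> (\<lambda>k. v k $ j) \<longlonglongrightarrow> 0" and l: "l < r"
  shows "(\<lambda>k. (A *\<^sub>v v k) $ l) \<longlonglongrightarrow> 0"
proof -
  have "(\<lambda>k. \<Sum>j<c. A $$ (l,j) * v k $ j) \<longlonglongrightarrow> (\<Sum>j<c. A $$ (l,j) * 0)"
    by (intro tendsto_sum tendsto_mult tendsto_const v0) auto
  then show ?thesis using mv_sum[OF A vc l] by simp
qed

lemma lc_lim0:
  assumes "\<And>j l. j < N \<Longrightarrow> l < n \<Longrightarrow> (\<lambda>k. X k j $ l) \<longlonglongrightarrow> 0" "l < n"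
  shows "(\<lambda>k. lc N c (X k) n $ l) \<longlonglongrightarrow> 0"
proof -
  have "(\<lambda>k. \<Sum>j<N. c j * X k j $ l) \<longlonglongrightarrow> (\<Sum>j<N. c j * 0)"
    by (intro tendsto_sum tendsto_mult tendsto_const assms) auto
  then show ?thesis using assms(2) by simp
qed

lemma zeta_scalar: assumes "weights_ok N a" "i < N"
  shows "(\<Sum>j<N. a i j * (yt i - yt j)) + iota R i * yt i = (\<Sum>j<N. Lbar N R a i j * yt j)"
proof -
  have "(\<Sum>j<N. Lbar N R a i j * yt j) = (\<Sum>j<N. (if i = j then (din N a i + iota R i) * yt j else 0) - a i j * yt j)"
    using assms by (intro sum.cong) (auto simp: Lbar_alt algebra_simps)
  also have "\<dots> = (din N a i + iota R i) * yt i - (\<Sum>j<N. a i j * yt j)"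
    using assms by (simp add: sum_subtractf)
  also have "\<dots> = (\<Sum>j<N. a i j * (yt i - yt j)) + iota R i * yt i"
    by (simp add: din_def algebra_simps sum_subtractf sum_distrib_left)
  finally show ?thesis by simp
qed



theorem theorem4:
  fixes N p nr nr0 nq :: nat
    and n m q h ns :: "nat \<Rightarrow> nat"
    and A B C Cm Ah Bh Eh Ch Dh As Cs :: "nat \<Rightarrow> real mat"
    and Ar Cr Ac Bc Cc K H :: "real mat"
    and roots :: "nat set" and a :: "nat \<Rightarrow> nat \<Rightarrow> real"
    and x \<xi> xh \<eta> :: "nat \<Rightarrow> nat \<Rightarrow> real vec" and xr :: "nat \<Rightarrow> real vec"
  assumes agent_dims: "\<And>i. i < N \<Longrightarrow>
      A i \<in> carrier_mat (n i) (n i) \<and> B i \<in> carrier_mat (n i) (m i) \<and>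
      C i \<in> carrier_mat p (n i) \<and> Cm i \<in> carrier_mat (q i) (n i)"
    and agent_stabilizable: "\<And>i. i < N \<Longrightarrow> stabilizable (A i) (B i)"
    and agent_detectable: "\<And>i. i < N \<Longrightarrow> detectable (C i) (A i)"
    and agent_right_invertible: "\<And>i. i < N \<Longrightarrow> right_invertible (C i) (A i) (B i)"
    and agent_meas_detectable: "\<And>i. i < N \<Longrightarrow> detectable (Cm i) (A i)"
    and exo_dims: "Ar \<in> carrier_mat nr0 nr0" "Cr \<in> carrier_mat p nr0"
    and exo_observable: "observable Cr Ar"
    and exo_eigs: "\<And>e. eigenvalue (cmat Ar) e \<Longrightarrow> cmod e \<le> 1"
    and chk_dims: "Ac \<in> carrier_mat nr nr" "Bc \<in> carrier_mat nr p" "Cc \<in> carrier_mat p nr"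
    and chk_reproduces: "reproduces_outputs Cc Ac Cr Ar"
    and chk_eigs: "eigs_extend_by_zeros Ac Ar"
    and chk_uniform_rank: "invertible_uniform_rank Cc Ac Bc nq"
    and chk_no_zeros: "\<And>z. \<not> invariant_zero Cc Ac Bc z"
    and pre_dims: "\<And>i. i < N \<Longrightarrow>
      Ah i \<in> carrier_mat (h i) (h i) \<and> Bh i \<in> carrier_mat (h i) (q i) \<and>
      Eh i \<in> carrier_mat (h i) p \<and> Ch i \<in> carrier_mat (m i) (h i) \<and>
      Dh i \<in> carrier_mat (m i) p \<and>
      As i \<in> carrier_mat (ns i) (ns i) \<and> Cs i \<in> carrier_mat p (ns i)"
    and pre_form: "\<And>i. i < N \<Longrightarrow>
      interconnection_form (A i) (B i) (C i) (Cm i) (Ah i) (Bh i) (Eh i) (Ch i) (Dh i)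
        Ac Bc Cc (As i) (Cs i)"
    and pre_As_stable: "\<And>i. i < N \<Longrightarrow> schur_stable (As i)"
    and KH_dims: "K \<in> carrier_mat p nr" "H \<in> carrier_mat nr p"
    and K_stab: "schur_stable (Ac - Bc * K)"
    and H_stab: "schur_stable (Ac - H * Cc)"
    and roots_nonempty: "roots \<noteq> {}"
    and graph: "in_graph_set N roots a"
    and traj_dims: "\<And>i k. i < N \<Longrightarrow>
      x i k \<in> carrier_vec (n i) \<and> \<xi> i k \<in> carrier_vec (h i) \<and>
      xh i k \<in> carrier_vec nr \<and> \<eta> i k \<in> carrier_vec nr"
    and exo_traj_dims: "\<And>k. xr k \<in> carrier_vec nr0"
    and exo_dyn: "\<And>k. xr (Suc k) = Ar *\<^sub>v xr k"
    and agent_dyn: "\<And>i k. i < N \<Longrightarrow>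
      x i (Suc k) = A i *\<^sub>v x i k + B i *\<^sub>v (Ch i *\<^sub>v \<xi> i k - Dh i *\<^sub>v (K *\<^sub>v \<eta> i k))"
    and pre_dyn: "\<And>i k. i < N \<Longrightarrow>
      \<xi> i (Suc k) = Ah i *\<^sub>v \<xi> i k + Bh i *\<^sub>v (Cm i *\<^sub>v x i k) - Eh i *\<^sub>v (K *\<^sub>v \<eta> i k)"
    and obs_dyn: "\<And>i k. i < N \<Longrightarrow>
      xh i (Suc k) = Ac *\<^sub>v xh i k
        + H *\<^sub>v (zeta_bar N roots a p (\<lambda>j. C j *\<^sub>v x j k) (Cr *\<^sub>v xr k) i - Cc *\<^sub>v xh i k)
        - Bc *\<^sub>v (K *\<^sub>v zeta_check N roots a nr (\<lambda>j. \<eta> j k) i)"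
    and eta_dyn: "\<And>i k. i < N \<Longrightarrow>
      \<eta> i (Suc k) = (Ac - Bc * K) *\<^sub>v \<eta> i k + Ac *\<^sub>v xh i k
        - Ac *\<^sub>v zeta_check N roots a nr (\<lambda>j. \<eta> j k) i"
  shows "\<forall>i < N. \<forall>l < p. (\<lambda>k. (C i *\<^sub>v x i k - Cr *\<^sub>v xr k) $ l) \<longlonglongrightarrow> 0"

proof (intro allI impI)
  fix i0 l0 assume i0: "i0 < N" and l0: "l0 < p"
  have Ac: "Ac \<in> carrier_mat nr nr" and Bc: "Bc \<in> carrier_mat nr p" and Cc: "Cc \<in> carrier_mat p nr"
    and K: "K \<in> carrier_mat p nr" and H: "H \<in> carrier_mat nr p" and Ar: "Ar \<in> carrier_mat nr0 nr0"
    and Cr: "Cr \<in> carrier_mat p nr0"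
    using chk_dims KH_dims exo_dims by auto
  have dimsM: "dim_row Ac = nr" "dim_col Ac = nr" "dim_row Bc = nr" "dim_col Bc = p"
    "dim_row Cc = p" "dim_col Cc = nr" "dim_row K = p" "dim_col K = nr" "dim_row H = nr" "dim_col H = p"
    using Ac Bc Cc K H by auto
  have Ac_ev: "cmod e \<le> 1" if "eigenvalue (cmat Ac) e" for e
    using chk_eigs exo_eigs that unfolding eigs_extend_by_zeros_def by fastforce
  have xr_pow: "xr k = Ar ^\<^sub>m k *\<^sub>v xr 0" for k
  proof (induction k)
    case 0 then show ?case using exo_traj_dims[of 0] Ar by simp
  next
    case (Suc k)
    have "xr (Suc k) = Ar *\<^sub>v (Ar ^\<^sub>m k *\<^sub>v xr 0)" using exo_dyn Suc by simp
    also have "\<dots> = (Ar * Ar ^\<^sub>m k) *\<^sub>v xr 0"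
      using Ar exo_traj_dims[of 0] by (intro assoc_mult_mat_vec[symmetric]) auto
    finally show ?case using pow_mat_Suc_left[OF Ar] by simp
  qed
  have "xr 0 \<in> carrier_vec (dim_row Ar)" using exo_traj_dims[of 0] Ar by simp
  from chk_reproduces[unfolded reproduces_outputs_def, rule_format, OF this]
  obtain xc0 where xc0: "xc0 \<in> carrier_vec nr" "\<And>k. Cr *\<^sub>v (Ar ^\<^sub>m k *\<^sub>v xr 0) = Cc *\<^sub>v (Ac ^\<^sub>m k *\<^sub>v xc0)"
    using Ac by auto
  define xc where "xc k = Ac ^\<^sub>m k *\<^sub>v xc0" for k
  have xc_c: "xc k \<in> carrier_vec nr" for k unfolding xc_def by (rule mult_mat_vec_carrier[OF pow_carrier_mat[OF Ac] xc0(1)])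
  have xc_dyn: "xc (Suc k) = Ac *\<^sub>v xc k" for k
    unfolding xc_def pow_mat_Suc_left[OF Ac] by (rule assoc_mult_mat_vec[OF Ac pow_carrier_mat[OF Ac] xc0(1)])
  have yr: "Cr *\<^sub>v xr k = Cc *\<^sub>v xc k" for k unfolding xc_def by (subst xr_pow) (rule xc0(2))
  define v where "v i k = - (K *\<^sub>v \<eta> i k)" for i k
  have "\<forall>i\<in>{..<N}. \<exists>XW. \<forall>k. fst XW k \<in> carrier_vec nr \<and> snd XW k \<in> carrier_vec (ns i) \<and>
      fst XW (Suc k) = Ac *\<^sub>v fst XW k + Bc *\<^sub>v (v i k + Cs i *\<^sub>v snd XW k) \<and>
      snd XW (Suc k) = As i *\<^sub>v snd XW k \<and> C i *\<^sub>v x i k = Cc *\<^sub>v fst XW k"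
  proof
    fix i assume "i \<in> {..<N}"
    then have i: "i < N" by simp
    have dA: "dim_row (A i) = n i" "dim_row (Ah i) = h i" "dim_row (As i) = ns i"
      "Dh i \<in> carrier_mat (m i) p" "Eh i \<in> carrier_mat (h i) p" "Ch i \<in> carrier_mat (m i) (h i)"
      using agent_dims[OF i] pre_dims[OF i] by auto
    have vc: "\<forall>k. v i k \<in> carrier_vec (dim_col Bc) \<and> x i k \<in> carrier_vec (dim_row (A i)) \<and>
        \<xi> i k \<in> carrier_vec (dim_row (Ah i))"
      using traj_dims[OF i] dA K unfolding v_def by (auto simp: dimsM)
    have dyn: "\<forall>k. x i (Suc k) = A i *\<^sub>v x i k + B i *\<^sub>v (Ch i *\<^sub>v \<xi> i k + Dh i *\<^sub>v v i k) \<and>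
       \<xi> i (Suc k) = Ah i *\<^sub>v \<xi> i k + Bh i *\<^sub>v (Cm i *\<^sub>v x i k) + Eh i *\<^sub>v v i k"
    proof
      fix k
      have e1: "Ch i *\<^sub>v \<xi> i k + Dh i *\<^sub>v v i k = Ch i *\<^sub>v \<xi> i k - Dh i *\<^sub>v (K *\<^sub>v \<eta> i k)"
        unfolding v_def by (rule eq_vecI) (use dA K traj_dims[OF i, of k] in auto)
      have e2: "Ah i *\<^sub>v \<xi> i k + Bh i *\<^sub>v (Cm i *\<^sub>v x i k) + Eh i *\<^sub>v v i k =
          Ah i *\<^sub>v \<xi> i k + Bh i *\<^sub>v (Cm i *\<^sub>v x i k) - Eh i *\<^sub>v (K *\<^sub>v \<eta> i k)"
        unfolding v_def by (rule eq_vecI) (use dA K traj_dims[OF i, of k] in auto)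
      show "x i (Suc k) = A i *\<^sub>v x i k + B i *\<^sub>v (Ch i *\<^sub>v \<xi> i k + Dh i *\<^sub>v v i k) \<and>
       \<xi> i (Suc k) = Ah i *\<^sub>v \<xi> i k + Bh i *\<^sub>v (Cm i *\<^sub>v x i k) + Eh i *\<^sub>v v i k"
        unfolding e1 e2 using agent_dyn[OF i] pre_dyn[OF i] by simp
    qed
    from pre_form[OF i, unfolded interconnection_form_def, rule_format, of "v i" "x i" "\<xi> i", OF vc[rule_format] dyn[rule_format]]
    obtain xb w where xbw: "\<And>k. xb k \<in> carrier_vec (dim_row Ac) \<and> w k \<in> carrier_vec (dim_row (As i)) \<and>
            xb (Suc k) = Ac *\<^sub>v xb k + Bc *\<^sub>v (v i k + Cs i *\<^sub>v w k) \<and>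
            w (Suc k) = As i *\<^sub>v w k \<and> C i *\<^sub>v x i k = Cc *\<^sub>v xb k" by blast
    show "\<exists>XW. \<forall>k. fst XW k \<in> carrier_vec nr \<and> snd XW k \<in> carrier_vec (ns i) \<and>
      fst XW (Suc k) = Ac *\<^sub>v fst XW k + Bc *\<^sub>v (v i k + Cs i *\<^sub>v snd XW k) \<and>
      snd XW (Suc k) = As i *\<^sub>v snd XW k \<and> C i *\<^sub>v x i k = Cc *\<^sub>v fst XW k"
      using xbw dA dimsM by (intro exI[of _ "(xb, w)"]) auto
  qed
  from bchoice[OF this] obtain XW where XW: "\<And>i k. i < N \<Longrightarrow> fst (XW i) k \<in> carrier_vec nr \<and> snd (XW i) k \<in> carrier_vec (ns i) \<and>
      fst (XW i) (Suc k) = Ac *\<^sub>v fst (XW i) k + Bc *\<^sub>v (v i k + Cs i *\<^sub>v snd (XW i) k) \<and>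
      snd (XW i) (Suc k) = As i *\<^sub>v snd (XW i) k \<and> C i *\<^sub>v x i k = Cc *\<^sub>v fst (XW i) k" by auto
  define XB where "XB i = fst (XW i)" for i
  define W where "W i = snd (XW i)" for i
  have XB_c: "XB i k \<in> carrier_vec nr" and W_c: "W i k \<in> carrier_vec (ns i)"
    and XB_dyn: "XB i (Suc k) = Ac *\<^sub>v XB i k + Bc *\<^sub>v (v i k + Cs i *\<^sub>v W i k)"
    and W_dyn: "W i (Suc k) = As i *\<^sub>v W i k"
    and out: "C i *\<^sub>v x i k = Cc *\<^sub>v XB i k" if "i < N" for i k
    using XW[OF that, of k] unfolding XB_def W_def by auto
  define dd where "dd i k = Cs i *\<^sub>v W i k" for i k
  have dd_c: "dd i k \<in> carrier_vec p" if "i < N" for i k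
    unfolding dd_def using pre_dims[OF that] W_c[OF that] by auto
  have dd0: "(\<lambda>k. dd i k $ l) \<longlonglongrightarrow> 0" if "i < N" "l < p" for i l
  proof -
    have As: "As i \<in> carrier_mat (ns i) (ns i)" and Cs: "Cs i \<in> carrier_mat p (ns i)"
      using pre_dims[OF that(1)] by auto
    have W0: "(\<lambda>k. W i k $ j) \<longlonglongrightarrow> 0" if "j < ns i" for j
    proof (rule vec_conv_schur[OF As pre_As_stable[OF \<open>i < N\<close>]])
      show "W i k \<in> carrier_vec (ns i)" for k using W_c[OF \<open>i < N\<close>] .
      show "0\<^sub>v (ns i) \<in> carrier_vec (ns i)" for k :: nat by simp
      show "W i (Suc k) = As i *\<^sub>v W i k + 0\<^sub>v (ns i)" for k
        using W_dyn[OF \<open>i < N\<close>, of k] right_zero_vec[OF mult_mat_vec_carrier[OF As W_c[OF \<open>i < N\<close>, of k]]] by simp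
    qed (use that in auto)
    show ?thesis unfolding dd_def by (rule mv_lim0[OF Cs W_c[OF that(1)] W0 that(2)])
  qed

  have eta_c: "\<eta> i k \<in> carrier_vec nr" and xh_c: "xh i k \<in> carrier_vec nr" if "i < N" for i k
    using traj_dims[OF that] by auto
  define Xt where "Xt i k = XB i k - xc k" for i k
  have Xt_c: "Xt i k \<in> carrier_vec nr" if "i < N" for i k unfolding Xt_def using XB_c[OF that] xc_c by simp
  have dv: "dim_vec (Xt i k) = nr" "dim_vec (\<eta> i k) = nr" "dim_vec (xh i k) = nr" "dim_vec (dd i k) = p"
    "dim_vec (XB i k) = nr" if "i < N" for i k
    using Xt_c[OF that] eta_c[OF that] xh_c[OF that] dd_c[OF that] XB_c[OF that] by auto
  have dxc: "dim_vec (xc k) = nr" for k using xc_c by auto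
  note dist = mv_add_d mv_minus_d mv_uminus_d matminus_mv_d matmult_mv_d
  have Xt_dyn: "Xt i (Suc k) = Ac *\<^sub>v Xt i k + Bc *\<^sub>v (- (K *\<^sub>v \<eta> i k) + dd i k)" if i: "i < N" for i k
    unfolding Xt_def XB_dyn[OF i] xc_dyn v_def dd_def[symmetric]
    by (rule eq_vecI) (simp_all add: dist dimsM dv[OF i] dxc)
  have out_err: "C i *\<^sub>v x i k - Cr *\<^sub>v xr k = Cc *\<^sub>v Xt i k" if i: "i < N" for i k
    unfolding out[OF i] yr Xt_def
    by (rule eq_vecI) (simp_all add: dist dimsM dv[OF i] dxc)
  define Lt where "Lt i j = Lbar N roots a i j / (2 + din N a i)" for i j
  have wo: "weights_ok N a" using graph unfolding in_graph_set_def by auto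
  have Dbar_Lt: "Dbar N roots a i j = (if i = j then 1 else 0) - Lt i j" for i j
    unfolding Dbar_def Lt_def by simp
  have lc_cong: "lc N c X n = lc N c Y n" if "\<And>j. j < N \<Longrightarrow> X j = Y j" for c X Y n
    unfolding lc_def using that by (intro eq_vecI) auto
  have zeta_eq: "zeta_bar N roots a p (\<lambda>j. C j *\<^sub>v x j k) (Cr *\<^sub>v xr k) i = Cc *\<^sub>v lc N (Lt i) (\<lambda>j. Xt j k) nr"
    if i: "i < N" for i k
  proof (rule eq_vecI)
    fix l assume "l < dim_vec (Cc *\<^sub>v lc N (Lt i) (\<lambda>j. Xt j k) nr)"
    then have l: "l < p" using dimsM by simp
    define yt where "yt j = (Cc *\<^sub>v Xt j k) $ l" for j
    have yy: "(C j *\<^sub>v x j k) $ l = yt j + (Cr *\<^sub>v xr k) $ l" if j: "j < N" for j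
    proof -
      have "(C j *\<^sub>v x j k - Cr *\<^sub>v xr k) $ l = yt j" unfolding out_err[OF j] yt_def ..
      then show ?thesis using l Cr by simp
    qed
    have "zeta_bar N roots a p (\<lambda>j. C j *\<^sub>v x j k) (Cr *\<^sub>v xr k) i $ l =
        ((\<Sum>j<N. a i j * ((C i *\<^sub>v x i k) $ l - (C j *\<^sub>v x j k) $ l)) + iota roots i * ((C i *\<^sub>v x i k) $ l - (Cr *\<^sub>v xr k) $ l)) / (2 + din N a i)"
      unfolding zeta_bar_def using l by simp
    also have "\<dots> = ((\<Sum>j<N. a i j * (yt i - yt j)) + iota roots i * yt i) / (2 + din N a i)"
      using yy i by (intro arg_cong2[where f = "(/)"] arg_cong2[where f = "(+)"] sum.cong) auto
    also have "\<dots> = (\<Sum>j<N. Lt i j * yt j)"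
      unfolding zeta_scalar[OF wo i] Lt_def by (simp add: sum_divide_distrib)
    also have "\<dots> = (Cc *\<^sub>v lc N (Lt i) (\<lambda>j. Xt j k) nr) $ l"
    proof -
      have "Cc *\<^sub>v lc N (Lt i) (\<lambda>j. Xt j k) nr = lc N (Lt i) (\<lambda>j. Cc *\<^sub>v Xt j k) p"
        by (rule lc_mv[OF Cc]) (rule Xt_c)
      then show ?thesis unfolding yt_def using l by simp
    qed
    finally show "zeta_bar N roots a p (\<lambda>j. C j *\<^sub>v x j k) (Cr *\<^sub>v xr k) i $ l = (Cc *\<^sub>v lc N (Lt i) (\<lambda>j. Xt j k) nr) $ l" .
  qed (use dimsM in \<open>simp add: zeta_bar_def\<close>)
  have zc_eq: "zeta_check N roots a nr (\<lambda>j. \<eta> j k) i = lc N (Lt i) (\<lambda>j. \<eta> j k) nr" if i: "i < N" for i k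
  proof (rule eq_vecI)
    fix l assume "l < dim_vec (lc N (Lt i) (\<lambda>j. \<eta> j k) nr)"
    then have l: "l < nr" by simp
    have "(\<Sum>j<N. Dbar N roots a i j * \<eta> j k $ l) = (\<Sum>j<N. (if i = j then \<eta> j k $ l else 0) - Lt i j * \<eta> j k $ l)"
      unfolding Dbar_Lt by (intro sum.cong) (auto simp: algebra_simps)
    also have "\<dots> = \<eta> i k $ l - (\<Sum>j<N. Lt i j * \<eta> j k $ l)" using i by (simp add: sum_subtractf)
    finally show "zeta_check N roots a nr (\<lambda>j. \<eta> j k) i $ l = lc N (Lt i) (\<lambda>j. \<eta> j k) nr $ l"
      unfolding zeta_check_def using l by simp
  qed (simp add: zeta_check_def)

  define LX where "LX i k = lc N (Lt i) (\<lambda>j. Xt j k) nr" for i k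
  define L\<eta> where "L\<eta> i k = lc N (Lt i) (\<lambda>j. \<eta> j k) nr" for i k
  define LD where "LD i k = lc N (Lt i) (\<lambda>j. dd j k) p" for i k
  have dL: "dim_vec (LX i k) = nr" "dim_vec (L\<eta> i k) = nr" "dim_vec (LD i k) = p" for i k
    unfolding LX_def L\<eta>_def LD_def by auto
  define E where "E i k = LX i k - xh i k" for i k
  have E_c: "E i k \<in> carrier_vec nr" if "i < N" for i k unfolding E_def LX_def using xh_c[OF that] by simp
  have LX_dyn: "LX i (Suc k) = Ac *\<^sub>v LX i k + Bc *\<^sub>v (- (K *\<^sub>v L\<eta> i k) + LD i k)" for i k
  proof -
    have "LX i (Suc k) = lc N (Lt i) (\<lambda>j. Ac *\<^sub>v Xt j k + Bc *\<^sub>v (- (K *\<^sub>v \<eta> j k) + dd j k)) nr"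
      unfolding LX_def by (rule lc_cong) (rule Xt_dyn)
    also have "\<dots> = lc N (Lt i) (\<lambda>j. Ac *\<^sub>v Xt j k) nr + lc N (Lt i) (\<lambda>j. Bc *\<^sub>v (- (K *\<^sub>v \<eta> j k) + dd j k)) nr"
      by (rule lc_add) (use Xt_c Ac Bc K eta_c dd_c in \<open>auto intro!: mult_mat_vec_carrier[OF Bc] mult_mat_vec_carrier[OF K]\<close>)
    also have "lc N (Lt i) (\<lambda>j. Ac *\<^sub>v Xt j k) nr = Ac *\<^sub>v LX i k"
      unfolding LX_def by (rule lc_mv[OF Ac, symmetric]) (rule Xt_c)
    also have "lc N (Lt i) (\<lambda>j. Bc *\<^sub>v (- (K *\<^sub>v \<eta> j k) + dd j k)) nr = Bc *\<^sub>v lc N (Lt i) (\<lambda>j. - (K *\<^sub>v \<eta> j k) + dd j k) p"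
      by (rule lc_mv[OF Bc, symmetric]) (use eta_c dd_c K in auto)
    also have "lc N (Lt i) (\<lambda>j. - (K *\<^sub>v \<eta> j k) + dd j k) p = lc N (Lt i) (\<lambda>j. - (K *\<^sub>v \<eta> j k)) p + LD i k"
      unfolding LD_def by (rule lc_add) (use eta_c dd_c K in auto)
    also have "lc N (Lt i) (\<lambda>j. - (K *\<^sub>v \<eta> j k)) p = - lc N (Lt i) (\<lambda>j. K *\<^sub>v \<eta> j k) p"
      by (rule lc_uminus) (use eta_c K in auto)
    also have "lc N (Lt i) (\<lambda>j. K *\<^sub>v \<eta> j k) p = K *\<^sub>v L\<eta> i k"
      unfolding L\<eta>_def by (rule lc_mv[OF K, symmetric]) (rule eta_c)
    finally show ?thesis .
  qed
  have xh_dyn: "xh i (Suc k) = Ac *\<^sub>v xh i k + H *\<^sub>v (Cc *\<^sub>v LX i k - Cc *\<^sub>v xh i k) - Bc *\<^sub>v (K *\<^sub>v L\<eta> i k)"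
    if i: "i < N" for i k
    unfolding obs_dyn[OF i] zeta_eq[OF i] zc_eq[OF i] LX_def L\<eta>_def ..
  have E_dyn: "E i (Suc k) = (Ac - H * Cc) *\<^sub>v E i k + Bc *\<^sub>v LD i k" if i: "i < N" for i k
    unfolding E_def LX_dyn xh_dyn[OF i]
    by (rule eq_vecI) (simp_all add: dist dimsM dv[OF i] dL)
  have AHC: "Ac - H * Cc \<in> carrier_mat nr nr" by (rule minus_carrier_mat[OF mult_carrier_mat[OF H Cc]])
  have LD0: "(\<lambda>k. LD i k $ l) \<longlonglongrightarrow> 0" if "l < p" for i l
    unfolding LD_def by (rule lc_lim0[OF dd0 that])
  have E0: "(\<lambda>k. E i k $ l) \<longlonglongrightarrow> 0" if i: "i < N" and l: "l < nr" for i l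
  proof (rule vec_conv_schur[where v = "E i" and u = "\<lambda>k. Bc *\<^sub>v LD i k", OF AHC H_stab E_c[OF i] _ E_dyn[OF i] _ l])
    show "Bc *\<^sub>v LD i k \<in> carrier_vec nr" for k using Bc unfolding LD_def by simp
    show "(\<lambda>k. (Bc *\<^sub>v LD i k) $ l') \<longlonglongrightarrow> 0" if "l' < nr" for l'
      by (rule mv_lim0[OF Bc _ LD0 that]) (simp add: LD_def)
  qed
  define \<Delta> where "\<Delta> k i = Xt i k - \<eta> i k" for k i
  have \<Delta>_c: "\<Delta> k i \<in> carrier_vec nr" if "i < N" for k i unfolding \<Delta>_def using Xt_c[OF that] eta_c[OF that] by simp
  have d\<Delta>: "dim_vec (\<Delta> k i) = nr" if "i < N" for k i using \<Delta>_c[OF that] by simp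
  have D\<Delta>: "vec nr (\<lambda>l. \<Sum>j<N. Dbar N roots a i j * \<Delta> k j $ l) = (Xt i k - \<eta> i k) - (LX i k - L\<eta> i k)"
    if i: "i < N" for i k
  proof (rule eq_vecI)
    fix l assume "l < dim_vec ((Xt i k - \<eta> i k) - (LX i k - L\<eta> i k))"
    then have l: "l < nr" using dL by simp
    have "(\<Sum>j<N. Dbar N roots a i j * \<Delta> k j $ l) =
        (\<Sum>j<N. (if i = j then Xt j k $ l - \<eta> j k $ l else 0) - (Lt i j * Xt j k $ l - Lt i j * \<eta> j k $ l))"
      unfolding Dbar_Lt \<Delta>_def by (intro sum.cong refl) (use l dv in \<open>auto simp: algebra_simps\<close>)
    also have "\<dots> = (Xt i k $ l - \<eta> i k $ l) - ((\<Sum>j<N. Lt i j * Xt j k $ l) - (\<Sum>j<N. Lt i j * \<eta> j k $ l))"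
      using i by (simp add: sum_subtractf)
    finally show "vec nr (\<lambda>l. \<Sum>j<N. Dbar N roots a i j * \<Delta> k j $ l) $ l = ((Xt i k - \<eta> i k) - (LX i k - L\<eta> i k)) $ l"
      using l i dv[OF i] dL unfolding LX_def L\<eta>_def by simp
  qed (use dL in simp)
  have eta_dyn': "\<eta> i (Suc k) = (Ac - Bc * K) *\<^sub>v \<eta> i k + Ac *\<^sub>v xh i k - Ac *\<^sub>v L\<eta> i k" if i: "i < N" for i k
    unfolding eta_dyn[OF i] zc_eq[OF i] L\<eta>_def ..
  have \<Delta>_dyn: "\<Delta> (Suc k) i = Ac *\<^sub>v vec nr (\<lambda>l. \<Sum>j<N. Dbar N roots a i j * \<Delta> k j $ l) + (Ac *\<^sub>v E i k + Bc *\<^sub>v dd i k)"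
    if i: "i < N" for k i
    unfolding D\<Delta>[OF i] unfolding \<Delta>_def Xt_dyn[OF i] eta_dyn'[OF i] E_def
    by (rule eq_vecI) (simp_all add: dist dimsM dv[OF i] dL)
  have f_c: "Ac *\<^sub>v E i k + Bc *\<^sub>v dd i k \<in> carrier_vec nr" for i k by (intro add_carrier_vec carrier_vecI) (use Ac Bc in auto)
  have f0: "(\<lambda>k. (Ac *\<^sub>v E i k + Bc *\<^sub>v dd i k) $ l) \<longlonglongrightarrow> 0" if i: "i < N" and l: "l < nr" for i l
  proof -
    have "(\<lambda>k. (Ac *\<^sub>v E i k) $ l + (Bc *\<^sub>v dd i k) $ l) \<longlonglongrightarrow> 0 + 0"
      by (intro tendsto_add mv_lim0[OF Ac E_c[OF i] E0[OF i] l] mv_lim0[OF Bc dd_c[OF i] dd0[OF i] l])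
    then show ?thesis using l dimsM by simp
  qed
  have \<Delta>0: "(\<lambda>k. \<Delta> k i $ l) \<longlonglongrightarrow> 0" if i: "i < N" and l: "l < nr" for i l
    by (rule kron_conv[OF Ac Ac_ev graph \<Delta>_c f_c \<Delta>_dyn f0 i l])
  have ABK: "Ac - Bc * K \<in> carrier_mat nr nr" by (rule minus_carrier_mat[OF mult_carrier_mat[OF Bc K]])
  have Xt_dyn2: "Xt i (Suc k) = (Ac - Bc * K) *\<^sub>v Xt i k + (Bc *\<^sub>v (K *\<^sub>v \<Delta> k i) + Bc *\<^sub>v dd i k)"
    if i: "i < N" for i k
    unfolding Xt_dyn[OF i] \<Delta>_def
    by (rule eq_vecI) (simp_all add: dist dimsM dv[OF i])
  have Xt0: "(\<lambda>k. Xt i0 k $ l) \<longlonglongrightarrow> 0" if l: "l < nr" for l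
  proof (rule vec_conv_schur[where v = "Xt i0" and u = "\<lambda>k. Bc *\<^sub>v (K *\<^sub>v \<Delta> k i0) + Bc *\<^sub>v dd i0 k", OF ABK K_stab Xt_c[OF i0] _ Xt_dyn2[OF i0] _ l])
    show "Bc *\<^sub>v (K *\<^sub>v \<Delta> k i0) + Bc *\<^sub>v dd i0 k \<in> carrier_vec nr" for k by (intro add_carrier_vec carrier_vecI) (use Bc in auto)
    show "(\<lambda>k. (Bc *\<^sub>v (K *\<^sub>v \<Delta> k i0) + Bc *\<^sub>v dd i0 k) $ l') \<longlonglongrightarrow> 0" if l': "l' < nr" for l'
    proof -
      have K\<Delta>: "(\<lambda>k. (K *\<^sub>v \<Delta> k i0) $ j) \<longlonglongrightarrow> 0" if "j < p" for j
        by (rule mv_lim0[OF K \<Delta>_c[OF i0] \<Delta>0[OF i0] that])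
      have "(\<lambda>k. (Bc *\<^sub>v (K *\<^sub>v \<Delta> k i0)) $ l' + (Bc *\<^sub>v dd i0 k) $ l') \<longlonglongrightarrow> 0 + 0"
        by (intro tendsto_add mv_lim0[OF Bc _ K\<Delta> l'] mv_lim0[OF Bc dd_c[OF i0] dd0[OF i0] l'])
          (use K \<Delta>_c[OF i0] in auto)
      then show ?thesis using l' dimsM by simp
    qed
  qed
  show "(\<lambda>k. (C i0 *\<^sub>v x i0 k - Cr *\<^sub>v xr k) $ l0) \<longlonglongrightarrow> 0"
    unfolding out_err[OF i0] by (rule mv_lim0[OF Cc Xt_c[OF i0] Xt0 l0])
qed


end
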